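(* Consider Algorithm MWHVC (described in the context) run on a hypergraph $G=(V,E)$ of rank $f$ with nonnegative vertex weights $w$, with parameters $\varepsilon\in(0,1]$, $\beta=\varepsilon/(f+\varepsilon)$ and multiplier $\alpha>1$. For every $i\ge 0$, the values $\delta_i(e)$ form a feasible edge packing, i.e. $\sum_{e\in E(v)}\delta_i(e)\le w(v)$ for every vertex $v\in V$, and $\delta_i(e)\ge 0$ for every hyperedge $e\in E$.
   Context: Let $G=(V,E)$ be a hypergraph: each hyperedge is a nonempty subset of $V$ of size at most $f$ (rank $f$). Vertices have nonnegative weights $w(v)$. For $v\in V$, $E(v)=\{e\in E: v\in e\}$; $\Delta=\max_v |E(v)|\ge 3$. A hyperedge $e$ is covered by $C\subseteq V$ if $e\cap C\neq\emptyset$. The computation is distributed in synchronous rounds on the bipartite network with node set $V\cup E$ and a link between $v$ and $e$ iff $v\in e$. Parameters: $\varepsilon\in(0,1]$, $\beta=\varepsilon/(f+\varepsilon)$, and a multiplier $\alpha>1$. Algorithm MWHVC: Initialize $C\gets\emptyset$ and $E'(v)\gets E(v)$ for every $v$. Iteration $0$: every hyperedge $e$ sets $\mathrm{deal}_0(e)=\beta\cdot\min_{v\in e} w(v)/|E(v)|$ and $\delta_0(e)=\mathrm{deal}_0(e)$. For $i=1,2,\dots$: (a) every vertex $v\notin C$ (not terminated) checks whether $\sum_{e\in E(v)}\delta_{i-1}(e)\ge(1-\beta)w(v)$; if so, $v$ joins $C$, tells every $e\in E'(v)$ that $e$ is covered, and terminates. (b) Every uncovered hyperedge that receives such a message becomes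 covered, informs all its vertices, and terminates. (c) Every vertex $v\notin C$ that is told $e$ is covered sets $E'(v)\gets E'(v)\setminus\{e\}$; if $E'(v)=\emptyset$, $v$ terminates without joining $C$. (d) Every vertex $v\notin C$ sends "raise" to all $e\in E'(v)$ if $\sum_{e\in E'(v)}\mathrm{deal}_{i-1}(e)\le(\beta/\alpha)w(v)$, and otherwise sends "stuck" to all $e\in E'(v)$. (e) Every uncovered hyperedge $e$ sets $\mathrm{deal}_i(e)=\mathrm{deal}_{i-1}(e)$ if it received some "stuck" message, and $\mathrm{deal}_i(e)=\alpha\cdot\mathrm{deal}_{i-1}(e)$ otherwise, and $\delta_i(e)=\delta_{i-1}(e)+\mathrm{deal}_i(e)$. If $e$ becomes covered in iteration $j$, then by convention $\delta_i(e)=\delta_{j-1}(e)$ for all $i\ge j$. *)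

theory Defs
  imports Complex_Main
begin

text \<open>Hypergraph: vertex set V, hyperedges E (a set of vertex sets).
  inc E v is E(v), the set of hyperedges containing v.\<close>

definition inc :: "'v set set \<Rightarrow> 'v \<Rightarrow> 'v set set" where
  "inc E v = {e \<in> E. v \<in> e}"

record 'v mwstate =
  coverC     :: "'v set"
  terminated :: "'v set"
  Eprime     :: "'v \<Rightarrow> 'v set set"
  covered    :: "'v set set"
  deal       :: "'v set \<Rightarrow> real"
  delta      :: "'v set \<Rightarrow> real"

definition mw_init :: "'v set set \<Rightarrow> ('v \<Rightarrow> real) \<Rightarrow> real \<Rightarrow> 'v mwstate" where
  "mw_init E w \<beta> =
     (let d = (\<lambda>e. \<beta> * Min ((\<lambda>v. w v / real (card (inc E v))) ` e)) in
     \<lparr> coverC = {}, terminated = {}, Eprime = inc E, covered = {},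
       deal = d, delta = d \<rparr>)"

definition mw_step :: "'v set \<Rightarrow> 'v set set \<Rightarrow> ('v \<Rightarrow> real) \<Rightarrow> real \<Rightarrow> real
                        \<Rightarrow> 'v mwstate \<Rightarrow> 'v mwstate" where
  "mw_step V E w \<beta> \<alpha> s =
    (let
       \<comment> \<open>(a) vertices joining C\<close>
       J = {v \<in> V. v \<notin> terminated s \<and>
                  (\<Sum>e\<in>inc E v. delta s e) \<ge> (1 - \<beta>) * w v};
       C' = coverC s \<union> J;
       \<comment> \<open>(b) newly covered hyperedges\<close>
       NC = {e \<in> E. e \<notin> covered s \<and> (\<exists>v\<in>J. e \<in> Eprime s v)};
       Cov' = covered s \<union> NC;
       \<comment> \<open>(c) update E' of non-terminated vertices not in C\<close>
       Ep' = (\<lambda>v. if v \<notin> terminated s \<and> v \<notin> J then Eprime s v - NC else Eprime s v);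
       T' = terminated s \<union> J \<union> {v \<in> V. v \<notin> terminated s \<and> v \<notin> J \<and> Ep' v = {}};
       \<comment> \<open>(d) active vertices send raise / stuck\<close>
       raise = (\<lambda>v. (\<Sum>e\<in>Ep' v. deal s e) \<le> (\<beta> / \<alpha>) * w v);
       stuck = (\<lambda>e. \<exists>v\<in>V - T'. e \<in> Ep' v \<and> \<not> raise v);
       \<comment> \<open>(e) update deals of uncovered hyperedges; covered ones are frozen\<close>
       deal' = (\<lambda>e. if e \<notin> Cov' \<and> \<not> stuck e then \<alpha> * deal s e else deal s e);
       delta' = (\<lambda>e. if e \<notin> Cov' then delta s e + deal' e else delta s e)
     in \<lparr> coverC = C', terminated = T', Eprime = Ep', covered = Cov',
          deal = deal', delta = delta' \<rparr>)"

definition mw_run :: "'v set \<Rightarrow> 'v set set \<Rightarrow> ('v \<Rightarrow> real) \<Rightarrow> real \<Rightarrow> real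
                       \<Rightarrow> nat \<Rightarrow> 'v mwstate" where
  "mw_run V E w \<beta> \<alpha> i = (mw_step V E w \<beta> \<alpha> ^^ i) (mw_init E w \<beta>)"

end

theory Submission
  imports Defs
begin

definition mw_inv :: "'v set \<Rightarrow> 'v set set \<Rightarrow> ('v \<Rightarrow> real) \<Rightarrow> real \<Rightarrow> 'v mwstate \<Rightarrow> bool" where
  "mw_inv V E w \<beta> s \<longleftrightarrow>
    (\<forall>e\<in>E. 0 \<le> deal s e \<and> 0 \<le> delta s e) \<and>
    (\<forall>v\<in>V. (\<Sum>e\<in>inc E v. delta s e) \<le> w v) \<and>
    (\<forall>v\<in>V. v \<in> terminated s \<longrightarrow> inc E v \<subseteq> covered s) \<and>
    (\<forall>v\<in>V. v \<notin> terminated s \<longrightarrow> Eprime s v \<subseteq> inc E v \<and> inc E v \<subseteq> Eprime s v \<union> covered s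
        \<and> Eprime s v \<inter> covered s = {} \<and> (\<Sum>e\<in>Eprime s v. deal s e) \<le> \<beta> * w v)"

lemma inc_finite: "finite E \<Longrightarrow> finite (inc E v)"
  unfolding inc_def by simp

lemma init_inv:
  assumes fE: "finite E" and sub: "\<forall>e\<in>E. e \<noteq> {} \<and> e \<subseteq> V" and fV: "finite V"
    and w: "\<forall>v\<in>V. 0 \<le> w v" and b0: "0 \<le> \<beta>" and b1: "\<beta> \<le> 1"
  shows "mw_inv V E w \<beta> (mw_init E w \<beta>)"
proof -
  define d where "d = (\<lambda>e. \<beta> * Min ((\<lambda>v. w v / real (card (inc E v))) ` e))"
  have init: "mw_init E w \<beta> = \<lparr> coverC = {}, terminated = {}, Eprime = inc E, covered = {},
       deal = d, delta = d \<rparr>" unfolding mw_init_def d_def Let_def by simp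
  have dnn: "0 \<le> d e" if "e \<in> E" for e
  proof -
    have fe: "finite e" using sub that fV finite_subset by blast
    have ne: "e \<noteq> {}" using sub that by blast
    have "0 \<le> Min ((\<lambda>v. w v / real (card (inc E v))) ` e)"
      using fe ne sub that w by (subst Min_ge_iff) (auto intro!: divide_nonneg_nonneg)
    then show ?thesis unfolding d_def using b0 by simp
  qed
  have dle: "d e \<le> \<beta> * (w v / real (card (inc E v)))" if "e \<in> inc E v" for e v
  proof -
    have "e \<in> E" "v \<in> e" using that unfolding inc_def by auto
    then have fe: "finite e" using sub fV finite_subset by blast
    have "Min ((\<lambda>v. w v / real (card (inc E v))) ` e) \<le> w v / real (card (inc E v))"
      using fe \<open>v \<in> e\<close> by (intro Min_le) auto
    then show ?thesis unfolding d_def using b0 by (metis mult_left_mono times_divide_eq_right)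
  qed
  have sumd: "(\<Sum>e\<in>inc E v. d e) \<le> \<beta> * w v" if "v \<in> V" for v
  proof (cases "inc E v = {}")
    case True then show ?thesis using b0 w that by simp
  next
    case False
    have c: "0 < card (inc E v)" using False inc_finite[OF fE] card_gt_0_iff by blast
    have "(\<Sum>e\<in>inc E v. d e) \<le> (\<Sum>e\<in>inc E v. \<beta> * (w v / real (card (inc E v))))"
      by (intro sum_mono dle)
    also have "\<dots> = \<beta> * w v" using c by simp
    finally show ?thesis .
  qed
  have "(\<Sum>e\<in>inc E v. d e) \<le> w v" if "v \<in> V" for v
  proof -
    have "\<beta> * w v \<le> w v" using b0 b1 w that by (intro mult_left_le_one_le) auto
    then show ?thesis using sumd[OF that] by linarith
  qed
  then show ?thesis unfolding mw_inv_def init using dnn sumd by auto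
qed

lemma step_inv:
  assumes fE: "finite E" and sub: "\<forall>e\<in>E. e \<subseteq> V"
    and w: "\<forall>v\<in>V. 0 \<le> w v" and b0: "0 \<le> \<beta>" and a1: "1 < \<alpha>"
    and I: "mw_inv V E w \<beta> s"
  shows "mw_inv V E w \<beta> (mw_step V E w \<beta> \<alpha> s)"
proof -
  define J where "J = {v \<in> V. v \<notin> terminated s \<and> (\<Sum>e\<in>inc E v. delta s e) \<ge> (1 - \<beta>) * w v}"
  define NC where "NC = {e \<in> E. e \<notin> covered s \<and> (\<exists>v\<in>J. e \<in> Eprime s v)}"
  define Cov' where "Cov' = covered s \<union> NC"
  define Ep' where "Ep' = (\<lambda>v. if v \<notin> terminated s \<and> v \<notin> J then Eprime s v - NC else Eprime s v)"
  define T' where "T' = terminated s \<union> J \<union> {v \<in> V. v \<notin> terminated s \<and> v \<notin> J \<and> Ep' v = {}}"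
  define raise where "raise = (\<lambda>v. (\<Sum>e\<in>Ep' v. deal s e) \<le> (\<beta> / \<alpha>) * w v)"
  define stuck where "stuck = (\<lambda>e. \<exists>v\<in>V - T'. e \<in> Ep' v \<and> \<not> raise v)"
  define deal' where "deal' = (\<lambda>e. if e \<notin> Cov' \<and> \<not> stuck e then \<alpha> * deal s e else deal s e)"
  define delta' where "delta' = (\<lambda>e. if e \<notin> Cov' then delta s e + deal' e else delta s e)"
  have step: "mw_step V E w \<beta> \<alpha> s = \<lparr> coverC = coverC s \<union> J, terminated = T', Eprime = Ep', covered = Cov',
          deal = deal', delta = delta' \<rparr>"
    unfolding mw_step_def Let_def J_def NC_def Cov'_def Ep'_def T'_def raise_def stuck_def deal'_def delta'_def
    by simp
  have I1: "\<forall>e\<in>E. 0 \<le> deal s e \<and> 0 \<le> delta s e"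
    and I2: "\<forall>v\<in>V. (\<Sum>e\<in>inc E v. delta s e) \<le> w v"
    and I3: "\<forall>v\<in>V. v \<in> terminated s \<longrightarrow> inc E v \<subseteq> covered s"
    and I4: "\<forall>v\<in>V. v \<notin> terminated s \<longrightarrow> Eprime s v \<subseteq> inc E v \<and> inc E v \<subseteq> Eprime s v \<union> covered s
        \<and> Eprime s v \<inter> covered s = {} \<and> (\<Sum>e\<in>Eprime s v. deal s e) \<le> \<beta> * w v"
    using I unfolding mw_inv_def by blast+
  have N1: "\<forall>e\<in>E. 0 \<le> deal' e \<and> 0 \<le> delta' e"
    using I1 a1 unfolding deal'_def delta'_def by auto
  have N3: "inc E v \<subseteq> Cov'" if "v \<in> V" and vT: "v \<in> T'" for v
  proof -
    consider "v \<in> terminated s" | "v \<notin> terminated s" "v \<in> J" | "v \<notin> terminated s" "v \<notin> J" "Ep' v = {}"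
      using vT unfolding T'_def by auto
    then show ?thesis
    proof cases
      case 1 then show ?thesis using I3 that unfolding Cov'_def by blast
    next
      case 2
      have a: "Eprime s v \<subseteq> inc E v" "inc E v \<subseteq> Eprime s v \<union> covered s" using I4 2 that by auto
      show ?thesis
      proof
        fix e assume e: "e \<in> inc E v"
        show "e \<in> Cov'"
        proof (cases "e \<in> covered s")
          case True then show ?thesis unfolding Cov'_def by blast
        next
          case False
          then have "e \<in> Eprime s v" using a e by blast
          moreover have "e \<in> E" using e unfolding inc_def by blast
          ultimately show ?thesis using False 2 unfolding Cov'_def NC_def by blast
        qed
      qed
    next
      case 3
      then have "Eprime s v \<subseteq> NC" unfolding Ep'_def by auto
      then show ?thesis using I4 3 that unfolding Cov'_def by blast
    qed
  qed
  have N4: "Ep' v \<subseteq> inc E v \<and> inc E v \<subseteq> Ep' v \<union> Cov' \<and> Ep' v \<inter> Cov' = {}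
       \<and> (\<Sum>e\<in>Ep' v. deal' e) \<le> \<beta> * w v" if "v \<in> V" "v \<notin> T'" for v
  proof -
    have nt: "v \<notin> terminated s" "v \<notin> J" using that unfolding T'_def by auto
    have Ep: "Ep' v = Eprime s v - NC" using nt unfolding Ep'_def by simp
    have a: "Eprime s v \<subseteq> inc E v" "inc E v \<subseteq> Eprime s v \<union> covered s"
        "Eprime s v \<inter> covered s = {}" "(\<Sum>e\<in>Eprime s v. deal s e) \<le> \<beta> * w v"
      using I4 nt that by auto
    have fEp: "finite (Eprime s v)" using a(1) inc_finite[OF fE] finite_subset by blast
    have EpE: "Ep' v \<subseteq> E" using Ep a(1) unfolding inc_def by auto
    have s: "(\<Sum>e\<in>Ep' v. deal' e) \<le> \<beta> * w v"
    proof (cases "raise v")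
      case True
      have "(\<Sum>e\<in>Ep' v. deal' e) \<le> (\<Sum>e\<in>Ep' v. \<alpha> * deal s e)"
      proof (rule sum_mono)
        fix e assume "e \<in> Ep' v"
        then have "0 \<le> deal s e" using EpE I1 by blast
        then show "deal' e \<le> \<alpha> * deal s e" unfolding deal'_def using a1
          by (auto simp: mult_le_cancel_right1)
      qed
      also have "\<dots> = \<alpha> * (\<Sum>e\<in>Ep' v. deal s e)" by (simp add: sum_distrib_left)
      also have "\<dots> \<le> \<alpha> * ((\<beta> / \<alpha>) * w v)" using True a1 unfolding raise_def
        by (intro mult_left_mono) auto
      also have "\<dots> = \<beta> * w v" using a1 by simp
      finally show ?thesis .
    next
      case False
      have "(\<Sum>e\<in>Ep' v. deal' e) = (\<Sum>e\<in>Ep' v. deal s e)"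
      proof (rule sum.cong)
        fix e assume "e \<in> Ep' v"
        then have "stuck e" unfolding stuck_def using False that by blast
        then show "deal' e = deal s e" unfolding deal'_def by simp
      qed simp
      also have "\<dots> \<le> (\<Sum>e\<in>Eprime s v. deal s e)"
        using Ep fEp I1 a(1) unfolding inc_def by (intro sum_mono2) auto
      finally show ?thesis using a(4) by linarith
    qed
    show ?thesis using a s Ep unfolding Cov'_def by blast
  qed
  have N2: "(\<Sum>e\<in>inc E v. delta' e) \<le> w v" if v: "v \<in> V" for v
  proof (cases "v \<in> T'")
    case True
    have "(\<Sum>e\<in>inc E v. delta' e) = (\<Sum>e\<in>inc E v. delta s e)"
      using N3[OF v True] unfolding delta'_def by (intro sum.cong) auto
    then show ?thesis using I2 v by simp
  next
    case False
    have nt: "v \<notin> terminated s" "v \<notin> J" using False unfolding T'_def by auto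
    then have lt: "(\<Sum>e\<in>inc E v. delta s e) < (1 - \<beta>) * w v" using v unfolding J_def by auto
    have b: "Ep' v \<subseteq> inc E v" "inc E v \<subseteq> Ep' v \<union> Cov'" "Ep' v \<inter> Cov' = {}"
      "(\<Sum>e\<in>Ep' v. deal' e) \<le> \<beta> * w v" using N4[OF v False] by auto
    have "(\<Sum>e\<in>inc E v. delta' e) = (\<Sum>e\<in>inc E v. delta s e + (if e \<in> Ep' v then deal' e else 0))"
      using b unfolding delta'_def by (intro sum.cong) auto
    also have "\<dots> = (\<Sum>e\<in>inc E v. delta s e) + (\<Sum>e\<in>inc E v. if e \<in> Ep' v then deal' e else 0)"
      by (simp add: sum.distrib)
    also have "(\<Sum>e\<in>inc E v. if e \<in> Ep' v then deal' e else 0) = (\<Sum>e\<in>Ep' v. deal' e)"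
      using b(1) inc_finite[OF fE] by (simp add: sum.If_cases Int_absorb1)
    moreover have "(1 - \<beta>) * w v + \<beta> * w v = w v" by (simp add: algebra_simps)
    ultimately show ?thesis using lt b(4) by linarith
  qed
  show ?thesis unfolding mw_inv_def step using N1 N2 N3 N4 by simp
qed

theorem mainTheorem2:
  fixes V :: "'v set" and E :: "'v set set" and w :: "'v \<Rightarrow> real"
    and f :: nat and \<epsilon> \<alpha> \<beta> :: real
  assumes "finite V"
    and "\<forall>e\<in>E. e \<noteq> {} \<and> e \<subseteq> V \<and> card e \<le> f"
    and "\<forall>v\<in>V. 0 \<le> w v"
    and "3 \<le> Max ((\<lambda>v. card (inc E v)) ` V)"
    and "0 < \<epsilon>" and "\<epsilon> \<le> 1"
    and "\<beta> = \<epsilon> / (real f + \<epsilon>)"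
    and "1 < \<alpha>"
  shows "\<forall>i::nat.
           (\<forall>v\<in>V. (\<Sum>e\<in>inc E v. delta (mw_run V E w \<beta> \<alpha> i) e) \<le> w v) \<and>
           (\<forall>e\<in>E. 0 \<le> delta (mw_run V E w \<beta> \<alpha> i) e)"
proof
  fix i :: nat
  have fE: "finite E"
  proof (rule finite_subset)
    show "E \<subseteq> Pow V" using assms(2) by blast
    show "finite (Pow V)" using assms(1) by simp
  qed
  have b0: "0 \<le> \<beta>" using assms(5,7) by simp
  have b1: "\<beta> \<le> 1" using assms(5,7) by simp
  have "mw_inv V E w \<beta> (mw_run V E w \<beta> \<alpha> i)"
  proof (induction i)
    case 0 show ?case unfolding mw_run_def using init_inv[OF fE _ assms(1,3) b0 b1] assms(2) by simp
  next
    case (Suc i)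
    have "mw_run V E w \<beta> \<alpha> (Suc i) = mw_step V E w \<beta> \<alpha> (mw_run V E w \<beta> \<alpha> i)"
      unfolding mw_run_def by simp
    then show ?case using step_inv[OF fE _ assms(3) b0 assms(8) Suc] assms(2) by simp
  qed
  then show "(\<forall>v\<in>V. (\<Sum>e\<in>inc E v. delta (mw_run V E w \<beta> \<alpha> i) e) \<le> w v) \<and>
           (\<forall>e\<in>E. 0 \<le> delta (mw_run V E w \<beta> \<alpha> i) e)" unfolding mw_inv_def by blast
qed

end
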